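(* In the synchronous crash-fault message-passing model described in the context, with at most $f\le p/2$ crashes in total, for every iteration $t$ and every node $i$ that has not crashed before computing its stochastic gradient at iteration $t$, $$\mathbb{E}\|\vec v_t^i-\vec x_t\|^2\le\frac{\alpha^2f^2M^2}{p^2}.$$
   Context: There are $p$ nodes $\mathcal P=\{1,\dots,p\}$, a learning rate $\alpha>0$, and all nodes start with $\vec v_0^i=\vec 0$; also $\vec x_0=\vec 0$. In iteration $s$ each alive node $j$ computes a stochastic gradient $\tilde G(\vec v_s^j)$ with $\mathbb{E}\|\tilde G(\vec v_s^j)\|^2\le M^2$ and broadcasts it. A node may crash (permanently) at some iteration, possibly after computing its gradient but before it reaches some receivers. $\mathcal L_s^i\subseteq\mathcal P$ denotes the set of nodes whose iteration-$s$ gradient is received by node $i$ (with $i\in\mathcal L_s^i$), and $I_s=\{j:\ j\in\mathcal L_s^{i'}\text{ for some node }i'\}$ is the set of nodes whose iteration-$s$ gradient reached at least one node. Node $i$ updates $\vec v_{s+1}^i=\vec v_s^i-\frac{\alpha}{p}\sum_{j\in\mathcal L_s^i}\tilde G(\vec v_s^j)$, and the global parameter is $\vec x_{s+1}=\vec x_s-\frac{\alpha}{p}\sum_{j\in I_s}\tilde G(\vec v_s^j)$. If $j\in I_s\setminus\mathcal L_s^i$ then $j$ crashed at iteration $s$; since each node crashes at most once and at most $f$ nodes crash, $\sum_{s}|I_s\setminus\mathcal L_s^i|\le f$ for every $i$. *)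

theory Defs
  imports "HOL-Probability.Probability"
begin

text \<open>Nodes are 1..p.  L s i w : set of nodes whose iteration-s gradient node i
receives (in outcome w).  G s j x w : stochastic gradient computed by node j at
iteration s at the point x (in outcome w); node j's gradient at iteration s is
G s j (v_s^j w) w.\<close>

definition I_set :: "nat \<Rightarrow> (nat \<Rightarrow> nat \<Rightarrow> 'w \<Rightarrow> nat set) \<Rightarrow> nat \<Rightarrow> 'w \<Rightarrow> nat set" where
  "I_set p L s w = (\<Union>i'\<in>{1..p}. L s i' w)"

primrec vloc :: "real \<Rightarrow> nat \<Rightarrow> (nat \<Rightarrow> nat \<Rightarrow> 'w \<Rightarrow> nat set)
    \<Rightarrow> (nat \<Rightarrow> nat \<Rightarrow> 'v::real_normed_vector \<Rightarrow> 'w \<Rightarrow> 'v) \<Rightarrow> nat \<Rightarrow> nat \<Rightarrow> 'w \<Rightarrow> 'v" where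
  "vloc \<alpha> p L G 0 i w = 0"
| "vloc \<alpha> p L G (Suc s) i w =
     vloc \<alpha> p L G s i w - (\<alpha> / real p) *\<^sub>R (\<Sum>j\<in>L s i w. G s j (vloc \<alpha> p L G s j w) w)"

primrec xglob :: "real \<Rightarrow> nat \<Rightarrow> (nat \<Rightarrow> nat \<Rightarrow> 'w \<Rightarrow> nat set)
    \<Rightarrow> (nat \<Rightarrow> nat \<Rightarrow> 'v::real_normed_vector \<Rightarrow> 'w \<Rightarrow> 'v) \<Rightarrow> nat \<Rightarrow> 'w \<Rightarrow> 'v" where
  "xglob \<alpha> p L G 0 w = 0"
| "xglob \<alpha> p L G (Suc s) w =
     xglob \<alpha> p L G s w - (\<alpha> / real p) *\<^sub>R (\<Sum>j\<in>I_set p L s w. G s j (vloc \<alpha> p L G s j w) w)"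

text \<open>crash j = Some c: node j crashes (permanently) at iteration c, possibly after
computing its iteration-c gradient; None: never crashes.\<close>

definition computes :: "(nat \<Rightarrow> nat option) \<Rightarrow> nat \<Rightarrow> nat \<Rightarrow> bool" where
  "computes crash j s = (case crash j of None \<Rightarrow> True | Some c \<Rightarrow> s \<le> c)"

definition alive_after :: "(nat \<Rightarrow> nat option) \<Rightarrow> nat \<Rightarrow> nat \<Rightarrow> bool" where
  "alive_after crash j s = (case crash j of None \<Rightarrow> True | Some c \<Rightarrow> s < c)"

end

theory Submission
  imports Defs
begin

lemma diff_formula:
  fixes L :: "nat \<Rightarrow> nat \<Rightarrow> 'w \<Rightarrow> nat set"
    and G :: "nat \<Rightarrow> nat \<Rightarrow> 'v::real_normed_vector \<Rightarrow> 'w \<Rightarrow> 'v"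
  assumes L_sub: "\<And>s i' w. L s i' w \<subseteq> {1..p}"
    and i: "i \<in> {1..p}"
  shows "vloc \<alpha> p L G t i w - xglob \<alpha> p L G t w
     = (\<alpha> / real p) *\<^sub>R (\<Sum>s<t. \<Sum>j\<in>I_set p L s w - L s i w. G s j (vloc \<alpha> p L G s j w) w)"
proof (induction t)
  case 0 then show ?case by simp
next
  case (Suc t)
  let ?g = "\<lambda>j. G t j (vloc \<alpha> p L G t j w) w"
  have fin: "finite (I_set p L t w)" using L_sub unfolding I_set_def
    by (meson UN_least finite_atLeastAtMost finite_subset)
  have sub: "L t i w \<subseteq> I_set p L t w" using i unfolding I_set_def by blast
  have "(\<Sum>j\<in>I_set p L t w - L t i w. ?g j) = sum ?g (I_set p L t w) - sum ?g (L t i w)"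
    by (simp add: sum_diff fin sub)
  then have "sum ?g (I_set p L t w) = sum ?g (L t i w) + (\<Sum>j\<in>I_set p L t w - L t i w. ?g j)"
    by simp
  then show ?case using Suc
    by (simp add: algebra_simps scaleR_diff_right scaleR_add_right)
qed

theorem mainTheorem8:
  fixes M :: "'w measure" and p f :: nat and \<alpha> Mg :: real
    and crash :: "nat \<Rightarrow> nat option"
    and L :: "nat \<Rightarrow> nat \<Rightarrow> 'w \<Rightarrow> nat set"
    and G :: "nat \<Rightarrow> nat \<Rightarrow> 'v::euclidean_space \<Rightarrow> 'w \<Rightarrow> 'v"
    and t i :: nat
  assumes "prob_space M"
    and "0 < p" and "\<alpha> > 0"
    and "real f \<le> real p / 2"
    and "card {j\<in>{1..p}. crash j \<noteq> None} \<le> f"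
    and L_sub: "\<And>s i' w. L s i' w \<subseteq> {j\<in>{1..p}. computes crash j s}"
    and L_self: "\<And>s i' w. i' \<in> {1..p} \<Longrightarrow> computes crash i' s \<Longrightarrow> i' \<in> L s i' w"
    and L_reliable: "\<And>s i' j w. i' \<in> {1..p} \<Longrightarrow> alive_after crash i' s \<Longrightarrow>
        j \<in> {1..p} \<Longrightarrow> computes crash j s \<Longrightarrow> crash j \<noteq> Some s \<Longrightarrow> j \<in> L s i' w"
    and G_meas: "\<And>s j. j \<in> {1..p} \<Longrightarrow>
        (\<lambda>w. G s j (vloc \<alpha> p L G s j w) w) \<in> borel_measurable M"
    and G_bound: "\<And>s j. j \<in> {1..p} \<Longrightarrow>
        (\<integral>\<^sup>+ w. ennreal ((norm (G s j (vloc \<alpha> p L G s j w) w))\<^sup>2) \<partial>M) \<le> ennreal (Mg\<^sup>2)"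
    and "i \<in> {1..p}" and "computes crash i t"
  shows "(\<integral>\<^sup>+ w. ennreal ((norm (vloc \<alpha> p L G t i w - xglob \<alpha> p L G t w))\<^sup>2) \<partial>M)
           \<le> ennreal (\<alpha>\<^sup>2 * (real f)\<^sup>2 * Mg\<^sup>2 / (real p)\<^sup>2)"
proof -
  define g where "g = (\<lambda>sj w. G (fst sj) (snd sj) (vloc \<alpha> p L G (fst sj) (snd sj) w) w)"
  define C where "C = {sj. fst sj < t \<and> snd sj \<in> {1..p} \<and> crash (snd sj) = Some (fst sj)}"
  define c where "c = (\<alpha> / real p)\<^sup>2"
  have c0: "c \<ge> 0" unfolding c_def by simp
  have finC: "finite C"
    by (rule finite_subset[of _ "{..<t} \<times> {1..p}"]) (auto simp: C_def)
  have cardC: "card C \<le> f"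
  proof -
    have "inj_on snd C" unfolding inj_on_def C_def by (auto simp: prod_eq_iff)
    moreover have "snd ` C \<subseteq> {j\<in>{1..p}. crash j \<noteq> None}" unfolding C_def by auto
    ultimately have "card C \<le> card {j\<in>{1..p}. crash j \<noteq> None}"
      by (rule card_inj_on_le) auto
    with assms(5) show ?thesis by simp
  qed
  have L_sub': "\<And>s i' w. L s i' w \<subseteq> {1..p}" using L_sub by blast
  have pw: "norm (vloc \<alpha> p L G t i w - xglob \<alpha> p L G t w) ^ 2
       \<le> c * real (card C) * (\<Sum>sj\<in>C. (norm (g sj w))\<^sup>2)" for w
  proof -
    define D where "D = Sigma {..<t} (\<lambda>s. I_set p L s w - L s i w)"
    have DC: "D \<subseteq> C"
    proof
      fix sj assume "sj \<in> D"
      then obtain s j where sj: "sj = (s, j)" "s < t" "j \<in> I_set p L s w" "j \<notin> L s i w"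
        unfolding D_def by auto
      then obtain i' where "j \<in> L s i' w" unfolding I_set_def by auto
      then have j: "j \<in> {1..p}" "computes crash j s" using L_sub by auto
      have "alive_after crash i s" using assms(12) sj(2)
        by (auto simp: computes_def alive_after_def split: option.splits)
      then have "crash j = Some s" using L_reliable[OF assms(11) _ j] sj(4) by blast
      then show "sj \<in> C" using sj j unfolding C_def by auto
    qed
    have finI: "\<And>s. finite (I_set p L s w - L s i w)"
    proof -
      fix s
      have "I_set p L s w \<subseteq> {1..p}" unfolding I_set_def using L_sub' by blast
      then show "finite (I_set p L s w - L s i w)" by (meson finite_Diff finite_atLeastAtMost finite_subset)
    qed
    have e1: "(\<Sum>s<t. \<Sum>j\<in>I_set p L s w - L s i w. G s j (vloc \<alpha> p L G s j w) w)
        = (\<Sum>(s,j)\<in>D. G s j (vloc \<alpha> p L G s j w) w)"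
      unfolding D_def by (rule sum.Sigma) (auto simp: finI)
    have e2: "(\<Sum>(s,j)\<in>D. G s j (vloc \<alpha> p L G s j w) w) = (\<Sum>sj\<in>D. g sj w)"
      unfolding g_def by (simp add: case_prod_beta')
    have eq: "vloc \<alpha> p L G t i w - xglob \<alpha> p L G t w = (\<alpha> / real p) *\<^sub>R (\<Sum>sj\<in>D. g sj w)"
      unfolding diff_formula[OF L_sub' assms(11)] e1 e2 ..
    have "norm (\<Sum>sj\<in>D. g sj w) \<le> (\<Sum>sj\<in>D. norm (g sj w))" by (rule norm_sum)
    also have "\<dots> \<le> (\<Sum>sj\<in>C. norm (g sj w))"
      by (rule sum_mono2[OF finC DC]) auto
    finally have n1: "norm (\<Sum>sj\<in>D. g sj w) \<le> (\<Sum>sj\<in>C. norm (g sj w))" .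
    have "(norm (\<Sum>sj\<in>D. g sj w))\<^sup>2 \<le> (\<Sum>sj\<in>C. norm (g sj w))\<^sup>2"
      using n1 by (simp add: power_mono)
    also have "\<dots> \<le> (\<Sum>sj\<in>C. (norm (g sj w))\<^sup>2) * card C"
      by (rule sum_squared_le_sum_of_squares)
    finally have n2: "(norm (\<Sum>sj\<in>D. g sj w))\<^sup>2 \<le> real (card C) * (\<Sum>sj\<in>C. (norm (g sj w))\<^sup>2)"
      by (simp add: mult.commute)
    have "norm (vloc \<alpha> p L G t i w - xglob \<alpha> p L G t w) ^ 2 = c * (norm (\<Sum>sj\<in>D. g sj w))\<^sup>2"
      unfolding eq c_def by (simp add: power_mult_distrib power_divide power2_abs)
    also have "\<dots> \<le> c * (real (card C) * (\<Sum>sj\<in>C. (norm (g sj w))\<^sup>2))"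
      using n2 c0 by (rule mult_left_mono)
    finally show ?thesis by simp
  qed
  have gm: "\<And>sj. sj \<in> C \<Longrightarrow> (\<lambda>w. ennreal ((norm (g sj w))\<^sup>2)) \<in> borel_measurable M"
    unfolding g_def C_def using G_meas by auto
  have gb: "\<And>sj. sj \<in> C \<Longrightarrow> (\<integral>\<^sup>+ w. ennreal ((norm (g sj w))\<^sup>2) \<partial>M) \<le> ennreal (Mg\<^sup>2)"
    unfolding g_def C_def using G_bound by auto
  have "(\<integral>\<^sup>+ w. ennreal ((norm (vloc \<alpha> p L G t i w - xglob \<alpha> p L G t w))\<^sup>2) \<partial>M)
      \<le> (\<integral>\<^sup>+ w. ennreal (c * real (card C)) * (\<Sum>sj\<in>C. ennreal ((norm (g sj w))\<^sup>2)) \<partial>M)"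
  proof (rule nn_integral_mono)
    fix w
    have "ennreal ((norm (vloc \<alpha> p L G t i w - xglob \<alpha> p L G t w))\<^sup>2)
        \<le> ennreal (c * real (card C) * (\<Sum>sj\<in>C. (norm (g sj w))\<^sup>2))"
      using pw[of w] by (rule ennreal_leI)
    also have "\<dots> = ennreal (c * real (card C)) * ennreal (\<Sum>sj\<in>C. (norm (g sj w))\<^sup>2)"
      by (rule ennreal_mult) (use c0 in \<open>auto intro: sum_nonneg\<close>)
    also have "ennreal (\<Sum>sj\<in>C. (norm (g sj w))\<^sup>2) = (\<Sum>sj\<in>C. ennreal ((norm (g sj w))\<^sup>2))"
      by (rule sum_ennreal[symmetric]) simp
    finally show "ennreal ((norm (vloc \<alpha> p L G t i w - xglob \<alpha> p L G t w))\<^sup>2)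
        \<le> ennreal (c * real (card C)) * (\<Sum>sj\<in>C. ennreal ((norm (g sj w))\<^sup>2))" .
  qed
  also have "\<dots> = ennreal (c * real (card C)) * (\<Sum>sj\<in>C. \<integral>\<^sup>+ w. ennreal ((norm (g sj w))\<^sup>2) \<partial>M)"
  proof -
    have m: "(\<lambda>w. \<Sum>sj\<in>C. ennreal ((norm (g sj w))\<^sup>2)) \<in> borel_measurable M"
      by (rule borel_measurable_sum) (rule gm)
    show ?thesis
      by (subst nn_integral_cmult[OF m]) (rule arg_cong[where f="(*) _"], rule nn_integral_sum[OF gm])
  qed
  also have "\<dots> \<le> ennreal (c * real (card C)) * (\<Sum>sj\<in>C. ennreal (Mg\<^sup>2))"
    by (intro mult_left_mono sum_mono gb) auto
  also have "\<dots> = ennreal (c * real (card C) * (real (card C) * Mg\<^sup>2))"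
    using c0 by (simp add: ennreal_mult ennreal_of_nat_eq_real_of_nat)
  also have "\<dots> \<le> ennreal (\<alpha>\<^sup>2 * (real f)\<^sup>2 * Mg\<^sup>2 / (real p)\<^sup>2)"
  proof (rule ennreal_leI)
    have "real (card C) * real (card C) \<le> real f * real f"
      using cardC by (simp add: mult_mono)
    then have "c * (real (card C) * real (card C)) * Mg\<^sup>2 \<le> c * (real f * real f) * Mg\<^sup>2"
      using c0 by (simp add: mult_left_mono mult_right_mono)
    then show "c * real (card C) * (real (card C) * Mg\<^sup>2) \<le> \<alpha>\<^sup>2 * (real f)\<^sup>2 * Mg\<^sup>2 / (real p)\<^sup>2"
      unfolding c_def by (simp add: power2_eq_square field_simps)
  qed
  finally show ?thesis .
qed

end
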